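(* $m_2^{(2)}(5,3)=8$.
   Context: For a prime power $q$ and $N\ge1$, a multiset of points in $\mathrm{PG}(N,q)$ is a map $\mathcal{K}$ from the points to $\mathbb{Z}_{\ge0}$, with $\mathcal{K}(S)=\sum_{P\in S}\mathcal{K}(P)$; its cardinality is $\mathcal{K}(\mathrm{PG}(N,q))$. Dimensions are projective (planes have dimension 2). For $0\le r\le N-1$ and a positive integer $w$, $m_q^{(r)}(N,w)$ is the maximum cardinality of a multiset of points in $\mathrm{PG}(N,q)$ such that every $r$-dimensional subspace has multiplicity at most $w$. *)

theory Defs
  imports Complex_Main "HOL-Library.Function_Algebras"
begin

(* Vectors of F^(N+1) are represented as functions nat => F with coordinates
   0..N, i.e. vanishing at every index > N. *)

definition scal :: "'a::field \<Rightarrow> (nat \<Rightarrow> 'a) \<Rightarrow> (nat \<Rightarrow> 'a)" where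
  "scal c v = (\<lambda>i. c * v i)"

definition vecs :: "nat \<Rightarrow> (nat \<Rightarrow> 'a::field) set" where
  "vecs N = {v. \<forall>i>N. v i = 0}"

definition lin_subspace :: "nat \<Rightarrow> nat \<Rightarrow> (nat \<Rightarrow> 'a::field) set \<Rightarrow> bool" where
  "lin_subspace N d W \<longleftrightarrow> W \<subseteq> vecs N \<and> module.subspace scal W \<and> vector_space.dim scal W = d"

definition PG_points :: "nat \<Rightarrow> (nat \<Rightarrow> 'a::field) set set" where
  "PG_points N = {P. lin_subspace N 1 P}"

(* projective r-dimensional subspaces of PG(N,F): (r+1)-dimensional linear subspaces *)
definition PG_subspaces :: "nat \<Rightarrow> nat \<Rightarrow> (nat \<Rightarrow> 'a::field) set set" where
  "PG_subspaces N r = {W. lin_subspace N (r + 1) W}"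

definition points_in :: "nat \<Rightarrow> (nat \<Rightarrow> 'a::field) set \<Rightarrow> (nat \<Rightarrow> 'a) set set" where
  "points_in N W = {P \<in> PG_points N. P \<subseteq> W}"

definition mult_of :: "((nat \<Rightarrow> 'a::field) set \<Rightarrow> nat) \<Rightarrow> (nat \<Rightarrow> 'a) set set \<Rightarrow> nat" where
  "mult_of K S = (\<Sum>P\<in>S. K P)"

(* multisets of points of PG(N,F) (maps from the points to N, zero off the point set)
   such that every projective r-subspace has multiplicity at most w *)
definition admissible :: "'a itself \<Rightarrow> nat \<Rightarrow> nat \<Rightarrow> nat \<Rightarrow> ((nat \<Rightarrow> 'a::field) set \<Rightarrow> nat) \<Rightarrow> bool" where
  "admissible _ r N w K \<longleftrightarrow>
     (\<forall>P. P \<notin> PG_points N \<longrightarrow> K P = 0) \<and>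
     (\<forall>W \<in> PG_subspaces N r. mult_of K (points_in N W) \<le> w)"

(* m_q^(r)(N,w), the field of order q being the type 'a *)
definition m_q :: "'a::{field,finite} itself \<Rightarrow> nat \<Rightarrow> nat \<Rightarrow> nat \<Rightarrow> nat" where
  "m_q F r N w = Max {mult_of K (PG_points N) | K. admissible F r N w K}"

end

theory Submission
  imports Defs "HOL-Library.FuncSet"
begin

lemma vs_scal: "vector_space (scal :: 'a::field \<Rightarrow> (nat \<Rightarrow> 'a) \<Rightarrow> _)"
  by unfold_locales (auto simp: scal_def fun_eq_iff algebra_simps)

interpretation V: vector_space "scal :: 'a::field \<Rightarrow> (nat \<Rightarrow> 'a) \<Rightarrow> _"
  by (rule vs_scal)

lemma sum_fun_apply: "(sum f A) i = (\<Sum>x\<in>A. f x i)"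
  for f :: "_ \<Rightarrow> _ \<Rightarrow> 'b::comm_monoid_add"
  by (induction A rule: infinite_finite_induct) auto

lemma scal_apply[simp]: "scal c v i = c * v i"
  by (simp add: scal_def)

lemma subspace_vecs: "V.subspace (vecs N :: (nat \<Rightarrow> 'a::field) set)"
  by (auto simp: V.subspace_def vecs_def)

lemma finite_vecs: "finite (vecs N :: (nat \<Rightarrow> 'a::{field,finite}) set)"
proof -
  have "inj_on (\<lambda>f. restrict f {0..N}) (vecs N :: (nat \<Rightarrow> 'a) set)"
    by (auto simp: inj_on_def vecs_def fun_eq_iff restrict_def) (metis not_le)
  moreover have "(\<lambda>f. restrict f {0..N}) ` (vecs N :: (nat \<Rightarrow> 'a) set) \<subseteq> (\<Pi>\<^sub>E i\<in>{0..N}. UNIV)"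
    by auto
  ultimately show ?thesis
    by (meson finite_PiE finite_atLeastAtMost finite_imageD finite_subset finite)
qed

lemma card_vecs: "card (vecs N :: (nat \<Rightarrow> 'a::{field,finite}) set) \<le> card (UNIV::'a set) ^ (N+1)"
proof -
  have "inj_on (\<lambda>f. restrict f {0..N}) (vecs N :: (nat \<Rightarrow> 'a) set)"
    by (auto simp: inj_on_def vecs_def fun_eq_iff restrict_def) (metis not_le)
  moreover have "(\<lambda>f. restrict f {0..N}) ` (vecs N :: (nat \<Rightarrow> 'a) set) \<subseteq> (\<Pi>\<^sub>E i\<in>{0..N}. UNIV)"
    by auto
  ultimately have "card (vecs N :: (nat \<Rightarrow> 'a) set) \<le> card (\<Pi>\<^sub>E i\<in>{0..N}. (UNIV::'a set))"
    by (metis card_image card_mono finite_PiE finite_atLeastAtMost finite)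
  also have "\<dots> = card (UNIV::'a set) ^ (N+1)" by (simp add: card_PiE)
  finally show ?thesis .
qed

lemma finite_PG_points: "finite (PG_points N :: (nat \<Rightarrow> 'a::{field,finite}) set set)"
proof -
  have "PG_points N \<subseteq> Pow (vecs N :: (nat \<Rightarrow> 'a) set)"
    by (auto simp: PG_points_def lin_subspace_def)
  then show ?thesis using finite_vecs by (metis finite_Pow_iff finite_subset)
qed

lemma indep_card_le:
  fixes A W :: "(nat \<Rightarrow> 'a::field) set"
  assumes "V.independent A" "A \<subseteq> W" "V.dim W = d" "d > 0"
  shows "card A \<le> d"
proof -
  obtain B where B: "B \<subseteq> W" "V.independent B" "W \<subseteq> V.span B" "card B = V.dim W"
    using V.basis_exists by blast
  have "finite B" using B(4) assms(3,4) card.infinite by fastforce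
  then show ?thesis using V.independent_span_bound[OF _ assms(1)] B assms by auto
qed

lemma dependent_dim_less:
  fixes B :: "(nat \<Rightarrow> 'a::field) set"
  assumes "finite B" "V.dependent B"
  shows "V.dim B < card B"
proof -
  obtain B' where B': "B' \<subseteq> B" "V.independent B'" "B \<subseteq> V.span B'" "card B' = V.dim B"
    using V.basis_exists by blast
  have "B' \<noteq> B" using B' assms by auto
  then have "card B' < card B" using B'(1) assms(1) by (meson psubsetI psubset_card_mono)
  then show ?thesis using B' by simp
qed

definition ev :: "nat \<Rightarrow> nat \<Rightarrow> 'a::field" where
  "ev k = (\<lambda>i. if i = k then 1 else 0)"

lemma ev_indep: "V.independent ((\<lambda>k. ev k :: nat \<Rightarrow> 'a::field) ` {0..<n})"
proof (rule V.independent_if_scalars_zero)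
  show "finite ((\<lambda>k. ev k :: nat \<Rightarrow> 'a::field) ` {0..<n})" by simp
next
  fix f :: "(nat \<Rightarrow> 'a) \<Rightarrow> 'a" and x :: "nat \<Rightarrow> 'a"
  assume s: "(\<Sum>x\<in>(\<lambda>k. ev k) ` {0..<n}. scal (f x) x) = 0" and x: "x \<in> (\<lambda>k. ev k) ` {0..<n}"
  then obtain k where k: "k < n" "x = ev k" by auto
  have inj: "inj_on (\<lambda>k. ev k :: nat \<Rightarrow> 'a) {0..<n}"
    by (auto simp: inj_on_def ev_def fun_eq_iff)
  have "0 = (\<Sum>x\<in>(\<lambda>k. ev k) ` {0..<n}. scal (f x) x) k" using s by simp
  also have "\<dots> = (\<Sum>j\<in>{0..<n}. f (ev j) * ev j k)"
    using sum.reindex[OF inj, of "\<lambda>x. f x * x k"] by (simp add: sum_fun_apply)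
  also have "\<dots> = (\<Sum>j\<in>{0..<n}. if k = j then f (ev j) else 0)"
    by (rule sum.cong) (auto simp: ev_def)
  also have "\<dots> = f (ev k)"
    using k by (simp add: sum.delta)
  finally show "f x = 0" using k by simp
qed

lemma ev_vecs: "k \<le> N \<Longrightarrow> ev k \<in> vecs N"
  by (auto simp: ev_def vecs_def)

lemma ev_card: "card ((\<lambda>k. ev k :: nat \<Rightarrow> 'a::field) ` {0..<n}) = n"
proof -
  have inj: "inj_on (\<lambda>k. ev k :: nat \<Rightarrow> 'a) {0..<n}"
    by (auto simp: inj_on_def ev_def fun_eq_iff)
  then show ?thesis by (simp add: card_image)
qed

lemma point_rep:
  assumes "P \<in> PG_points N"
  shows "\<exists>v. v \<in> vecs N \<and> v \<noteq> 0 \<and> P = V.span {v :: nat \<Rightarrow> 'a::field}"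
proof -
  have P: "P \<subseteq> vecs N" "V.subspace P" "V.dim P = 1"
    using assms by (auto simp: PG_points_def lin_subspace_def)
  obtain B where B: "B \<subseteq> P" "V.independent B" "P \<subseteq> V.span B" "card B = V.dim P"
    using V.basis_exists by blast
  then obtain v where v: "B = {v}" using P(3) B(4) by (metis card_1_singletonE)
  have "V.span B \<subseteq> P" using B(1) P(2) by (rule V.span_minimal)
  then have "P = V.span {v}" using B(3) v by auto
  moreover have "v \<noteq> 0" using B(2) v by simp
  moreover have "v \<in> vecs N" using B(1) P(1) v by auto
  ultimately show ?thesis by blast
qed

lemma span_point:
  assumes "v \<in> vecs N" "v \<noteq> (0 :: nat \<Rightarrow> 'a::field)"
  shows "V.span {v} \<in> PG_points N"
proof -
  have "V.span {v} \<subseteq> vecs N" using assms(1) subspace_vecs by (intro V.span_minimal) auto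
  moreover have "V.dim (V.span {v}) = 1"
    using assms(2) by (subst V.dim_span_eq_card_independent) auto
  ultimately show ?thesis by (auto simp: PG_points_def lin_subspace_def)
qed

lemma extend_plane:
  fixes B :: "(nat \<Rightarrow> 'a::{field,finite}) set"
  assumes "B \<subseteq> vecs 5" "V.dim B \<le> 3"
  shows "\<exists>W \<in> PG_subspaces 5 2. B \<subseteq> W"
proof -
  obtain b where b: "b \<subseteq> B" "V.independent b" "B \<subseteq> V.span b" "card b = V.dim B"
    using V.basis_exists by blast
  obtain C where C: "b \<subseteq> C" "C \<subseteq> vecs 5" "V.independent C" "vecs 5 \<subseteq> V.span C"
    using V.maximal_independent_subset_extend[of b "vecs 5"] b(1) assms(1) b(2) by blast
  have fC: "finite C" using C(2) finite_vecs finite_subset by blast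
  have "(\<lambda>k. ev k :: nat \<Rightarrow> 'a) ` {0..<3} \<subseteq> vecs 5" by (auto intro: ev_vecs)
  then have "card ((\<lambda>k. ev k :: nat \<Rightarrow> 'a) ` {0..<3}) \<le> card C"
    using V.independent_span_bound[OF fC ev_indep] C(4) by blast
  then have c3: "3 \<le> card C" by (simp add: ev_card)
  obtain D where D: "b \<subseteq> D" "D \<subseteq> C" "card D = 3"
    using exists_subset_between[of b 3 C] b(4) assms(2) c3 C(1) fC by metis
  have iD: "V.independent D" using C(3) D(2) V.independent_mono by blast
  have "V.span D \<subseteq> vecs 5" using D(2) C(2) subspace_vecs by (intro V.span_minimal) auto
  moreover have "V.dim (V.span D) = 3" using iD D(3) by (simp add: V.dim_eq_card_independent)
  ultimately have "V.span D \<in> PG_subspaces 5 2"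
    by (auto simp: PG_subspaces_def lin_subspace_def)
  moreover have "B \<subseteq> V.span D" using b(3) V.span_mono[OF D(1)] by blast
  ultimately show ?thesis by blast
qed


lemma card_sd:
  assumes "finite A" "finite X"
  shows "card ((A - X) \<union> (X - A)) + 2 * card (A \<inter> X) = card A + card X"
proof -
  have "card ((A - X) \<union> (X - A)) = card (A - X) + card (X - A)"
    using assms by (intro card_Un_disjoint) auto
  moreover have "card A = card (A \<inter> X) + card (A - X)"
    using assms(1) by (rule card_Int_Diff)
  moreover have "card X = card (X \<inter> A) + card (X - A)"
    using assms(2) by (rule card_Int_Diff)
  moreover have "X \<inter> A = A \<inter> X" by blast
  ultimately show ?thesis by simp
qed

lemma sd_inj: "inj_on (\<lambda>A. (A - X) \<union> (X - A)) S"
  by (auto simp: inj_on_def)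

lemma comb_core:
  fixes G :: "'b set set"
  assumes finU: "finite U" and cU: "card U = 9" and GU: "G \<subseteq> Pow U" and G0: "{} \<in> G"
    and Gsd: "\<And>A B. A \<in> G \<Longrightarrow> B \<in> G \<Longrightarrow> (A - B) \<union> (B - A) \<in> G"
    and G8: "8 \<le> card G" and G5: "\<And>A. A \<in> G \<Longrightarrow> A \<noteq> {} \<Longrightarrow> 5 \<le> card A"
  shows False
proof -
  let ?sd = "\<lambda>X A. (A - X) \<union> (X - A)"
  have fG: "finite G" using GU finU by (meson finite_Pow_iff finite_subset)
  have finA: "finite A" if "A \<in> G" for A using that GU finU finite_subset by blast
  have half: "2 * card {A\<in>G. v \<in> A} \<le> card G" for v
  proof (cases "\<exists>X\<in>G. v \<in> X")
    case False
    then have "{A\<in>G. v \<in> A} = {}" by auto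
    then show ?thesis by (metis card.empty mult_0_right zero_le)
  next
    case True
    then obtain X where X: "X \<in> G" "v \<in> X" by blast
    have sub: "?sd X ` {A\<in>G. v \<in> A} \<subseteq> {A\<in>G. v \<notin> A}"
    proof
      fix B assume "B \<in> ?sd X ` {A\<in>G. v \<in> A}"
      then obtain A where A: "A \<in> G" "v \<in> A" "B = ?sd X A" by blast
      then show "B \<in> {A\<in>G. v \<notin> A}" using X Gsd[OF A(1) X(1)] by blast
    qed
    have le: "card {A\<in>G. v \<in> A} \<le> card {A\<in>G. v \<notin> A}"
      using card_inj_on_le[OF sd_inj sub] fG by simp
    have "G = {A\<in>G. v \<in> A} \<union> {A\<in>G. v \<notin> A}" by blast
    then have "card G = card {A\<in>G. v \<in> A} + card {A\<in>G. v \<notin> A}"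
      using fG by (metis (no_types, lifting) card_Un_disjoint disjoint_iff finite_Un mem_Collect_eq)
    then show ?thesis using le by simp
  qed
  have dc: "(\<Sum>A\<in>G. card A) = (\<Sum>v\<in>U. card {A\<in>G. v \<in> A})"
  proof -
    have "(\<Sum>A\<in>G. card A) = (\<Sum>A\<in>G. \<Sum>v\<in>U. if v \<in> A then 1 else 0)"
    proof (rule sum.cong)
      fix A assume "A \<in> G"
      then have "A = {v\<in>U. v \<in> A}" using GU by auto
      then have "card A = (\<Sum>v\<in>{v\<in>U. v \<in> A}. 1)" by simp
      also have "\<dots> = (\<Sum>v\<in>U. if v \<in> A then 1 else 0)" by (rule sum.inter_filter[OF finU])
      finally show "card A = (\<Sum>v\<in>U. if v \<in> A then 1 else 0)" .
    qed simp
    also have "\<dots> = (\<Sum>v\<in>U. \<Sum>A\<in>G. if v \<in> A then 1 else 0)" by (rule sum.swap)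
    also have "\<dots> = (\<Sum>v\<in>U. card {A\<in>G. v \<in> A})"
    proof (rule sum.cong)
      fix v show "(\<Sum>A\<in>G. if v \<in> A then 1 else 0) = card {A\<in>G. v \<in> A}"
        using sum.inter_filter[OF fG, of "\<lambda>_. 1::nat" "\<lambda>A. v \<in> A"] by simp
    qed simp
    finally show ?thesis .
  qed
  have S_le: "2 * (\<Sum>A\<in>G. card A) \<le> 9 * card G"
  proof -
    have "2 * (\<Sum>A\<in>G. card A) = (\<Sum>v\<in>U. 2 * card {A\<in>G. v \<in> A})" by (simp add: dc sum_distrib_left)
    also have "\<dots> \<le> (\<Sum>v\<in>U. card G)" by (rule sum_mono) (rule half)
    also have "\<dots> = 9 * card G" using cU by simp
    finally show ?thesis .
  qed
  define E where "E = {A\<in>G. even (card A)}"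
  define Od where "Od = {A\<in>G. odd (card A)}"
  have fE: "finite E" "finite Od" using fG by (auto simp: E_def Od_def)
  have GEO: "G = E \<union> Od" "E \<inter> Od = {}" by (auto simp: E_def Od_def)
  have cG: "card G = card E + card Od" using GEO fE by (simp add: card_Un_disjoint)
  have sG: "(\<Sum>A\<in>G. card A) = (\<Sum>A\<in>E. card A) + (\<Sum>A\<in>Od. card A)"
    using GEO fE by (simp add: sum.union_disjoint)
  have sO: "5 * card Od \<le> (\<Sum>A\<in>Od. card A)"
  proof -
    have "(\<Sum>A\<in>Od. 5) \<le> (\<Sum>A\<in>Od. card A)"
    proof (rule sum_mono)
      fix A assume "A \<in> Od"
      then have "A \<in> G" "A \<noteq> {}" by (auto simp: Od_def)
      then show "5 \<le> card A" using G5 by blast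
    qed
    then show ?thesis by simp
  qed
  have E0: "{} \<in> E" using G0 by (simp add: E_def)
  have sE: "6 * (card E - 1) \<le> (\<Sum>A\<in>E. card A)"
  proof -
    have "(\<Sum>A\<in>E - {{}}. 6) \<le> (\<Sum>A\<in>E - {{}}. card A)"
    proof (rule sum_mono)
      fix A assume "A \<in> E - {{}}"
      then have "5 \<le> card A" "even (card A)" using G5 by (auto simp: E_def)
      then show "6 \<le> card A" by presburger
    qed
    moreover have "(\<Sum>A\<in>E - {{}}. card A) = (\<Sum>A\<in>E. card A)"
      using fE E0 by (simp add: sum.remove)
    ultimately show ?thesis using fE E0 by (simp add: card_Diff_singleton)
  qed
  show False
  proof (cases "Od = {}")
    case True
    then have "card E = card G" using cG by simp
    then show False using S_le sG sE G8 True by simp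
  next
    case False
    then obtain X where X: "X \<in> Od" by blast
    have fX: "finite X" using X finA by (auto simp: Od_def)
    have par: "even (card (?sd X A)) \<longleftrightarrow> odd (card A)" if "A \<in> G" for A
      using card_sd[OF finA[OF that] fX] X by (auto simp: Od_def) presburger+
    have i1: "?sd X ` E \<subseteq> Od" using par X Gsd by (auto simp: E_def Od_def)
    have i2: "?sd X ` Od \<subseteq> E" using par X Gsd by (auto simp: E_def Od_def)
    have "card E \<le> card Od" using card_inj_on_le[OF sd_inj i1 fE(2)] .
    moreover have "card Od \<le> card E" using card_inj_on_le[OF sd_inj i2 fE(1)] .
    ultimately have "card E = card Od" by simp
    then show False using S_le sG sE sO G8 cG by simp
  qed
qed


lemma gf2_elems:
  assumes "card (UNIV :: 'a::{field,finite} set) = 2"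
  shows "(z::'a) = 0 \<or> z = 1"
proof (rule ccontr)
  assume "\<not> (z = 0 \<or> z = 1)"
  then have "card {0, 1, z} = 3" by auto
  moreover have "card {0, 1, z} \<le> card (UNIV :: 'a set)" by (rule card_mono) auto
  ultimately show False using assms by simp
qed

lemma gf2_two:
  assumes "card (UNIV :: 'a::{field,finite} set) = 2"
  shows "(1::'a) + 1 = 0"
proof -
  have "(1::'a) + 1 \<noteq> 1" by (metis add_cancel_right_right one_neq_zero)
  then show ?thesis using gf2_elems[OF assms, of "1+1"] by blast
qed

lemma gf2_vv:
  assumes "card (UNIV :: 'a::{field,finite} set) = 2"
  shows "(v :: nat \<Rightarrow> 'a) + v = 0"
proof
  fix i
  have "v i + v i = (1 + 1) * v i" by (simp add: algebra_simps)
  then show "(v + v) i = 0 i" using gf2_two[OF assms] by simp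
qed

lemma sum_sd:
  fixes A B :: "(nat \<Rightarrow> 'a::{field,finite}) set"
  assumes "card (UNIV :: 'a set) = 2" "finite A" "finite B"
  shows "(\<Sum>v\<in>(A - B) \<union> (B - A). v) = (\<Sum>v\<in>A. v) + (\<Sum>v\<in>B. v)"
proof -
  have a: "(\<Sum>v\<in>A. v) = (\<Sum>v\<in>A \<inter> B. v) + (\<Sum>v\<in>A - B. v)" using assms(2) by (rule sum.Int_Diff)
  have b: "(\<Sum>v\<in>B. v) = (\<Sum>v\<in>B \<inter> A. v) + (\<Sum>v\<in>B - A. v)" using assms(3) by (rule sum.Int_Diff)
  have c: "(\<Sum>v\<in>(A - B) \<union> (B - A). v) = (\<Sum>v\<in>A - B. v) + (\<Sum>v\<in>B - A. v)"
    using assms by (intro sum.union_disjoint) auto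
  have d: "B \<inter> A = A \<inter> B" by blast
  have e: "(\<Sum>v\<in>A \<inter> B. v) + (\<Sum>v\<in>A \<inter> B. v) = 0" by (rule gf2_vv[OF assms(1)])
  show ?thesis unfolding a b c d
    using e by (simp add: algebra_simps)
qed

lemma sum_vecs: "(\<And>v. v \<in> A \<Longrightarrow> v \<in> vecs N) \<Longrightarrow> (\<Sum>v\<in>A. v) \<in> vecs N"
  by (auto simp: vecs_def sum_fun_apply intro!: sum.neutral)

lemma gf2_core:
  fixes V9 :: "(nat \<Rightarrow> 'a::{field,finite}) set"
  assumes two: "card (UNIV :: 'a set) = 2" and V9: "V9 \<subseteq> vecs 5" "card V9 = 9"
    and small: "\<And>A. A \<subseteq> V9 \<Longrightarrow> A \<noteq> {} \<Longrightarrow> card A \<le> 4 \<Longrightarrow> (\<Sum>v\<in>A. v) \<noteq> 0"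
  shows False
proof -
  let ?s = "\<lambda>A. (\<Sum>v\<in>A. v)"
  let ?sd = "\<lambda>X A. (A - X) \<union> (X - A)"
  have fV: "finite V9" using V9(2) by (metis card.infinite zero_neq_numeral)
  define G where "G = {A \<in> Pow V9. ?s A = 0}"
  define P where "P = Pow V9"
  have fP: "finite P" using fV by (simp add: P_def)
  have cP: "card P = 512" using fV V9(2) by (simp add: P_def card_Pow)
  have img: "?s ` P \<subseteq> vecs 5" using V9(1) by (auto simp: P_def intro!: sum_vecs)
  have cimg: "card (?s ` P) \<le> 64"
  proof -
    have "card (?s ` P) \<le> card (vecs 5 :: (nat \<Rightarrow> 'a) set)"
      using img finite_vecs by (rule card_mono[rotated])
    also have "\<dots> \<le> 2 ^ 6" using card_vecs[where N=5 and 'a='a] two by simp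
    finally show ?thesis by simp
  qed
  have "\<exists>y\<in>?s ` P. 8 \<le> card {A\<in>P. ?s A = y}"
  proof (rule ccontr)
    assume "\<not> ?thesis"
    then have lt: "\<And>y. y \<in> ?s ` P \<Longrightarrow> card {A\<in>P. ?s A = y} \<le> 7" by force
    have "P = (\<Union>y\<in>?s ` P. {A\<in>P. ?s A = y})" by blast
    then have "card P \<le> (\<Sum>y\<in>?s ` P. card {A\<in>P. ?s A = y})"
      using card_UN_le[of "?s ` P" "\<lambda>y. {A\<in>P. ?s A = y}"] fP by simp
    also have "\<dots> \<le> (\<Sum>y\<in>?s ` P. 7)" by (rule sum_mono) (rule lt)
    also have "\<dots> = 7 * card (?s ` P)" by simp
    also have "\<dots> \<le> 7 * 64" using cimg by simp
    finally show False using cP by simp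
  qed
  then obtain y where y: "y \<in> ?s ` P" "8 \<le> card {A\<in>P. ?s A = y}" by blast
  then obtain A0 where A0: "A0 \<in> P" "?s A0 = y" by blast
  have fA0: "finite A0" using A0(1) fV by (auto simp: P_def intro: finite_subset)
  have sub: "?sd A0 ` {A\<in>P. ?s A = y} \<subseteq> G"
  proof
    fix B assume "B \<in> ?sd A0 ` {A\<in>P. ?s A = y}"
    then obtain A where A: "A \<in> P" "?s A = y" "B = ?sd A0 A" by blast
    have fA: "finite A" using A(1) fV by (auto simp: P_def intro: finite_subset)
    have "?s B = ?s A + ?s A0" using sum_sd[OF two fA fA0] A(3) by simp
    also have "\<dots> = 0" using A(2) A0(2) gf2_vv[OF two] by simp
    finally show "B \<in> G" using A(1) A0(1) A(3) by (auto simp: G_def P_def)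
  qed
  have fG: "finite G" using fP by (simp add: G_def P_def)
  have G8: "8 \<le> card G"
    using card_inj_on_le[OF sd_inj sub fG] y(2) by simp
  show False
  proof (rule comb_core[of V9 G])
    show "finite V9" by (rule fV)
    show "card V9 = 9" by (rule V9(2))
    show "G \<subseteq> Pow V9" by (auto simp: G_def)
    show "{} \<in> G" by (simp add: G_def)
    show "8 \<le> card G" by (rule G8)
  next
    fix A B assume "A \<in> G" "B \<in> G"
    then have "A \<subseteq> V9" "B \<subseteq> V9" "?s A = 0" "?s B = 0" by (auto simp: G_def)
    moreover have "finite A" "finite B" using \<open>A \<subseteq> V9\<close> \<open>B \<subseteq> V9\<close> fV finite_subset by auto
    ultimately show "?sd B A \<in> G"
      using sum_sd[OF two, of A B] by (auto simp: G_def)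
  next
    fix A assume "A \<in> G" "A \<noteq> {}"
    then show "5 \<le> card A" using small[of A] by (force simp: G_def)
  qed
qed


definition rep :: "(nat \<Rightarrow> 'a::field) set \<Rightarrow> (nat \<Rightarrow> 'a)" where
  "rep P = (SOME v. v \<in> vecs 5 \<and> v \<noteq> 0 \<and> P = V.span {v})"

lemma rep:
  assumes "P \<in> PG_points 5"
  shows "rep P \<in> vecs 5" "rep P \<noteq> 0" "P = V.span {rep P}"
  using someI_ex[OF point_rep[OF assms]] unfolding rep_def by blast+

lemma plane_bound:
  fixes K :: "(nat \<Rightarrow> 'a::{field,finite}) set \<Rightarrow> nat"
  assumes adm: "admissible TYPE('a) 2 5 3 K" and T: "T \<subseteq> PG_points 5" and d: "V.dim (rep ` T) \<le> 3"
  shows "(\<Sum>P\<in>T. K P) \<le> 3"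
proof -
  have "rep ` T \<subseteq> vecs 5" using T rep(1) by blast
  then obtain W where W: "W \<in> PG_subspaces 5 2" "rep ` T \<subseteq> W" using extend_plane d by blast
  have Wsub: "V.subspace W" using W(1) by (auto simp: PG_subspaces_def lin_subspace_def)
  have Tsub: "T \<subseteq> points_in 5 W"
  proof
    fix P assume P: "P \<in> T"
    have "V.span {rep P} \<subseteq> W" using W(2) P Wsub by (intro V.span_minimal) auto
    then show "P \<in> points_in 5 W" using rep(3)[of P] P T by (auto simp: points_in_def)
  qed
  have finW: "finite (points_in 5 W :: (nat \<Rightarrow> 'a) set set)"
    using finite_PG_points by (rule finite_subset[rotated]) (auto simp: points_in_def)
  have "(\<Sum>P\<in>T. K P) \<le> (\<Sum>P\<in>points_in 5 W. K P)" by (rule sum_mono2[OF finW Tsub]) simp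
  also have "\<dots> \<le> 3" using adm W(1) by (auto simp: admissible_def mult_of_def)
  finally show ?thesis .
qed

lemma upper:
  fixes K :: "(nat \<Rightarrow> 'a::{field,finite}) set \<Rightarrow> nat"
  assumes two: "card (UNIV :: 'a set) = 2" and adm: "admissible TYPE('a) 2 5 3 K"
  shows "mult_of K (PG_points 5) \<le> 8"
proof (rule ccontr)
  assume "\<not> ?thesis"
  then have big: "9 \<le> (\<Sum>P\<in>PG_points 5. K P)" by (simp add: mult_of_def)
  define S where "S = {P \<in> PG_points 5. K P \<noteq> 0}"
  have SP: "S \<subseteq> PG_points 5" by (auto simp: S_def)
  have fS: "finite S" using finite_subset[OF SP finite_PG_points] .
  have sumS: "(\<Sum>P\<in>PG_points 5. K P) = (\<Sum>P\<in>S. K P)"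
    using finite_PG_points by (intro sum.mono_neutral_right) (auto simp: S_def)
  have smallT: "(\<Sum>P\<in>T. K P) \<le> 3" if "T \<subseteq> S" "card T \<le> 3" for T
  proof (rule plane_bound[OF adm])
    show "T \<subseteq> PG_points 5" using that SP by blast
    have "finite T" using that fS finite_subset by blast
    then have "V.dim (rep ` T) \<le> card (rep ` T)" by (intro V.dim_le_card') simp
    also have "\<dots> \<le> card T" using \<open>finite T\<close> by (rule card_image_le)
    finally show "V.dim (rep ` T) \<le> 3" using that by simp
  qed
  show False
  proof (cases "card S \<le> 3")
    case True
    then show False using smallT[of S] big sumS by simp
  next
    case False
    show False
    proof (cases "\<exists>P\<in>S. 2 \<le> K P")
      case True
      then obtain P where P: "P \<in> S" "2 \<le> K P" by blast
      obtain T where T: "{P} \<subseteq> T" "T \<subseteq> S" "card T = 3"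
        using exists_subset_between[of "{P}" 3 S] P(1) False fS by auto
      have fT: "finite T" using T(3) by (metis card.infinite zero_neq_numeral)
      have "(\<Sum>Q\<in>T. K Q) = K P + (\<Sum>Q\<in>T - {P}. K Q)" using T(1) fT by (simp add: sum.remove)
      moreover have "(\<Sum>Q\<in>T - {P}. 1) \<le> (\<Sum>Q\<in>T - {P}. K Q)"
        using T(2) by (intro sum_mono) (auto simp: S_def)
      moreover have "card (T - {P}) = 2" using T fT by simp
      ultimately have "4 \<le> (\<Sum>Q\<in>T. K Q)" using P(2) by simp
      then show False using smallT[OF T(2)] T(3) by simp
    next
      case False
      then have K1: "K P = 1" if "P \<in> S" for P using that by (force simp: S_def)
      have "(\<Sum>P\<in>S. K P) = card S" using K1 by simp
      then have cS: "9 \<le> card S" using big sumS by simp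
      have injS: "inj_on rep S"
        using rep(3) SP by (metis inj_onI subsetD)
      have "card (rep ` S) = card S" using injS by (rule card_image)
      then obtain V9 where V9: "V9 \<subseteq> rep ` S" "card V9 = 9" "finite V9"
        using obtain_subset_with_card_n[of 9 "rep ` S"] cS by auto
      show False
      proof (rule gf2_core[OF two, of V9])
        show "V9 \<subseteq> vecs 5" using V9(1) SP rep(1) by blast
        show "card V9 = 9" by (rule V9(2))
      next
        fix A assume A: "A \<subseteq> V9" "A \<noteq> {}" "card A \<le> 4"
        show "(\<Sum>v\<in>A. v) \<noteq> 0"
        proof
          assume s0: "(\<Sum>v\<in>A. v) = 0"
          have fA: "finite A" using A(1) V9(3) finite_subset by blast
          have depA: "V.dependent A"
            unfolding V.dependent_explicit
            using fA A(2) s0 by (intro exI[of _ A] exI[of _ "\<lambda>_. 1"]) (auto simp: scal_def)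
          obtain B4 where B4: "A \<subseteq> B4" "B4 \<subseteq> V9" "card B4 = 4"
            using exists_subset_between[of A 4 V9] A V9 by auto
          have fB4: "finite B4" using B4(3) by (metis card.infinite zero_neq_numeral)
          have "V.dependent B4" using depA B4(1) V.dependent_mono by blast
          then have dB4: "V.dim B4 \<le> 3" using dependent_dim_less[OF fB4] B4(3) by simp
          define T where "T = {P\<in>S. rep P \<in> B4}"
          have TS: "T \<subseteq> S" by (auto simp: T_def)
          have rT: "rep ` T = B4" using B4(2) V9(1) by (auto simp: T_def)
          have "card T = 4" using card_image[OF inj_on_subset[OF injS TS]] rT B4(3) by simp
          moreover have "(\<Sum>P\<in>T. K P) = card T" using K1 TS by (simp add: subset_iff)
          moreover have "(\<Sum>P\<in>T. K P) \<le> 3"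
            using plane_bound[OF adm] TS SP rT dB4 by blast
          ultimately show False by simp
        qed
      qed
    qed
  qed
qed


definition vec :: "'a::field list \<Rightarrow> nat \<Rightarrow> 'a" where
  "vec xs = (\<lambda>i. if i < length xs then xs ! i else 0)"

lemma vec_inj[simp]:
  assumes "length xs = length ys"
  shows "(vec xs = vec ys) = (xs = ys)"
proof
  assume "vec xs = vec ys"
  then have "\<And>i. i < length xs \<Longrightarrow> xs ! i = ys ! i" using assms by (metis vec_def)
  then show "xs = ys" using assms by (simp add: nth_equalityI)
qed simp

lemma vec_apply: "vec xs i = (if i < length xs then xs ! i else 0)"
  by (simp add: vec_def)

lemma vec_vecs: "length xs = 6 \<Longrightarrow> vec xs \<in> vecs 5"
  by (auto simp: vec_def vecs_def)

definition H :: "(nat \<Rightarrow> 'a::field) set" where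
  "H = {vec [1,1,1,1,0,0], vec [0,0,1,1,1,1], vec [1,0,0,0,0,0], vec [0,1,0,0,0,0],
        vec [0,0,1,0,0,0], vec [0,0,0,1,0,0], vec [0,0,0,0,1,0], vec [0,0,0,0,0,1]}"

lemma card_H: "card (H :: (nat \<Rightarrow> 'a::field) set) = 8"
  by (simp add: H_def)

lemma H_vecs: "H \<subseteq> vecs 5"
  by (auto simp: H_def intro!: vec_vecs)

lemma H_indep:
  assumes BH: "B \<subseteq> (H :: (nat \<Rightarrow> 'a::field) set)" and cB: "card B \<le> 4"
  shows "V.independent B"
proof
  assume "V.dependent B"
  then obtain t u v0 where t: "finite t" "t \<subseteq> B" "(\<Sum>v\<in>t. scal (u v) v) = 0" "v0 \<in> t" "u v0 \<noteq> 0"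
    unfolding V.dependent_explicit by blast
  define c where "c v = (if v \<in> t then u v else 0)" for v
  have fH: "finite (H :: (nat \<Rightarrow> 'a) set)" by (simp add: H_def)
  have fB: "finite B" using BH fH finite_subset by blast
  have "(\<Sum>v\<in>H. scal (c v) v) = (\<Sum>v\<in>t. scal (c v) v)"
    using t(2) BH fH by (intro sum.mono_neutral_right) (auto simp: c_def scal_def)
  also have "\<dots> = (\<Sum>v\<in>t. scal (u v) v)" by (rule sum.cong) (auto simp: c_def)
  finally have sH: "(\<Sum>v\<in>H. scal (c v) v) = 0" using t(3) by simp
  have coord: "(\<Sum>v\<in>H. c v * v i) = 0" for i
    using fun_cong[OF sH, of i] by (simp add: sum_fun_apply)
  define a where "a = c (vec [1,1,1,1,0,0])"
  define b where "b = c (vec [0,0,1,1,1,1])"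
  define c0 where "c0 = c (vec [1,0,0,0,0,0])"
  define c1 where "c1 = c (vec [0,1,0,0,0,0])"
  define c2 where "c2 = c (vec [0,0,1,0,0,0])"
  define c3 where "c3 = c (vec [0,0,0,1,0,0])"
  define c4 where "c4 = c (vec [0,0,0,0,1,0])"
  define c5 where "c5 = c (vec [0,0,0,0,0,1])"
  have e0: "a + c0 = 0" using coord[of 0] by (simp add: H_def vec_apply a_def c0_def)
  have e1: "a + c1 = 0" using coord[of 1] by (simp add: H_def vec_apply a_def c1_def)
  have e2: "a + (b + c2) = 0" using coord[of 2] by (simp add: H_def vec_apply a_def b_def c2_def numeral_eq_Suc)
  have e3: "a + (b + c3) = 0" using coord[of 3] by (simp add: H_def vec_apply a_def b_def c3_def numeral_eq_Suc)
  have e4: "b + c4 = 0" using coord[of 4] by (simp add: H_def vec_apply b_def c4_def numeral_eq_Suc)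
  have e5: "b + c5 = 0" using coord[of 5] by (simp add: H_def vec_apply b_def c5_def numeral_eq_Suc)
  have Z: "v \<in> B" if "v \<in> H" "c v \<noteq> 0" for v
    using that t(2) by (auto simp: c_def split: if_splits)
  have five: False if "X \<subseteq> H" "5 \<le> card X" "\<forall>v\<in>X. c v \<noteq> 0" for X
  proof -
    have "X \<subseteq> B" using that Z by blast
    then have "card X \<le> card B" using fB by (rule card_mono[rotated])
    then show False using that cB by simp
  qed
  show False
  proof (cases "a = 0")
    case False
    have n0: "c0 \<noteq> 0" "c1 \<noteq> 0" using e0 e1 False by auto
    show False
    proof (cases "b = 0")
      case True
      have "c2 \<noteq> 0" "c3 \<noteq> 0" using e2 e3 False True by auto
      then show False using n0 False
        by (intro five[of "{vec [1,1,1,1,0,0], vec [1,0,0,0,0,0], vec [0,1,0,0,0,0], vec [0,0,1,0,0,0], vec [0,0,0,1,0,0]}"])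
          (auto simp: H_def a_def c0_def c1_def c2_def c3_def)
    next
      case False
      have "c4 \<noteq> 0" "c5 \<noteq> 0" using e4 e5 False by auto
      then show False using n0 False \<open>a \<noteq> 0\<close>
        by (intro five[of "{vec [1,1,1,1,0,0], vec [0,0,1,1,1,1], vec [1,0,0,0,0,0], vec [0,1,0,0,0,0], vec [0,0,0,0,1,0]}"])
          (auto simp: H_def a_def b_def c0_def c1_def c4_def)
    qed
  next
    case True
    show False
    proof (cases "b = 0")
      case True
      then have "c0 = 0" "c1 = 0" "c2 = 0" "c3 = 0" "c4 = 0" "c5 = 0"
        using e0 e1 e2 e3 e4 e5 \<open>a = 0\<close> by auto
      moreover have "v0 \<in> H" "c v0 \<noteq> 0" using t BH by (auto simp: c_def)
      ultimately show False using True \<open>a = 0\<close>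
        by (auto simp: H_def a_def b_def c0_def c1_def c2_def c3_def c4_def c5_def)
    next
      case False
      have "c4 \<noteq> 0" "c5 \<noteq> 0" "c2 \<noteq> 0" "c3 \<noteq> 0" using e4 e5 e2 e3 False \<open>a = 0\<close> by auto
      then show False using False
        by (intro five[of "{vec [0,0,1,1,1,1], vec [0,0,1,0,0,0], vec [0,0,0,1,0,0], vec [0,0,0,0,1,0], vec [0,0,0,0,0,1]}"])
          (auto simp: H_def b_def c2_def c3_def c4_def c5_def)
    qed
  qed
qed


lemma lower: "\<exists>K. admissible TYPE('a::{field,finite}) 2 5 3 K \<and> mult_of K (PG_points 5) = 8"
proof -
  define Pts8 where "Pts8 = (\<lambda>h. V.span {h}) ` (H :: (nat \<Rightarrow> 'a) set)"
  have hnz: "h \<noteq> 0" if "h \<in> (H :: (nat \<Rightarrow> 'a) set)" for h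
    using H_indep[of "{h}"] that by auto
  have PtsP: "Pts8 \<subseteq> PG_points 5"
    using span_point H_vecs hnz by (auto simp: Pts8_def)
  have inj: "inj_on (\<lambda>h. V.span {h}) (H :: (nat \<Rightarrow> 'a) set)"
  proof (rule inj_onI, rule ccontr)
    fix x y :: "nat \<Rightarrow> 'a"
    assume xy: "x \<in> H" "y \<in> H" "V.span {x} = V.span {y}" "x \<noteq> y"
    have "V.independent {x, y}" using xy by (intro H_indep) (auto simp: card_insert_if)
    moreover have "x \<in> V.span ({x, y} - {x})"
      using xy V.span_base[of x "{x}"] by (simp add: insert_Diff_if)
    ultimately show False unfolding V.dependent_def by blast
  qed
  have cP: "card Pts8 = 8" using card_image[OF inj] card_H by (simp add: Pts8_def)
  define K where "K P = (if P \<in> Pts8 then 1 else (0::nat))" for P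
  have mK: "mult_of K X = card (X \<inter> Pts8)" if "finite X" for X
  proof -
    have "mult_of K X = card {P\<in>X. P \<in> Pts8}"
      using sum.inter_filter[OF that, of "\<lambda>_. 1::nat" "\<lambda>P. P \<in> Pts8"] by (simp add: mult_of_def K_def)
    also have "{P\<in>X. P \<in> Pts8} = X \<inter> Pts8" by blast
    finally show ?thesis .
  qed
  have "admissible TYPE('a) 2 5 3 K"
    unfolding admissible_def
  proof (intro conjI allI impI ballI)
    fix P :: "(nat \<Rightarrow> 'a) set" assume "P \<notin> PG_points 5"
    then show "K P = 0" using PtsP by (auto simp: K_def)
  next
    fix W :: "(nat \<Rightarrow> 'a) set" assume W: "W \<in> PG_subspaces 5 2"
    have finW: "finite (points_in 5 W :: (nat \<Rightarrow> 'a) set set)"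
      using finite_PG_points by (rule finite_subset[rotated]) (auto simp: points_in_def)
    show "mult_of K (points_in 5 W) \<le> 3"
    proof (rule ccontr)
      assume "\<not> ?thesis"
      then have c4: "4 \<le> card (points_in 5 W \<inter> Pts8)" using mK[OF finW] by simp
      define B where "B = {h\<in>H. V.span {h} \<in> points_in 5 W}"
      have "points_in 5 W \<inter> Pts8 \<subseteq> (\<lambda>h. V.span {h}) ` B" by (auto simp: B_def Pts8_def)
      moreover have fB: "finite B" unfolding B_def using card_H[where 'a='a]
        by (metis (no_types, lifting) card.infinite finite_subset mem_Collect_eq subsetI zero_neq_numeral)
      ultimately have "card (points_in 5 W \<inter> Pts8) \<le> card ((\<lambda>h. V.span {h}) ` B)"
        by (intro card_mono) auto
      also have "\<dots> \<le> card B" using fB by (rule card_image_le)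
      finally have "card (points_in 5 W \<inter> Pts8) \<le> card B" .
      then obtain B4 where B4: "B4 \<subseteq> B" "card B4 = 4" "finite B4"
        using obtain_subset_with_card_n[of 4 B] c4 by auto
      have "V.independent B4" using B4 by (intro H_indep) (auto simp: B_def)
      moreover have "B4 \<subseteq> W"
      proof
        fix h assume "h \<in> B4"
        then have "V.span {h} \<subseteq> W" using B4(1) by (auto simp: B_def points_in_def)
        then show "h \<in> W" using V.span_base[of h "{h}"] by blast
      qed
      moreover have "V.dim W = 3" using W by (simp add: PG_subspaces_def lin_subspace_def)
      ultimately have "card B4 \<le> 3" by (intro indep_card_le) auto
      then show False using B4(2) by simp
    qed
  qed
  moreover have "mult_of K (PG_points 5) = 8"
    using mK[OF finite_PG_points] PtsP cP by (simp add: Int_absorb1)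
  ultimately show ?thesis by blast
qed

theorem mainTheorem14:
  assumes "card (UNIV :: 'a set) = 2"
  shows "m_q TYPE('a::{field,finite}) 2 5 3 = 8"
proof -
  let ?S = "{mult_of K (PG_points 5) | K. admissible TYPE('a) 2 5 3 (K :: (nat \<Rightarrow> 'a) set \<Rightarrow> nat)}"
  have le: "\<forall>x\<in>?S. x \<le> 8" using upper[OF assms] by blast
  have fin: "finite ?S" using le by (meson finite_nat_set_iff_bounded_le)
  obtain K0 :: "(nat \<Rightarrow> 'a) set \<Rightarrow> nat" where K0: "admissible TYPE('a) 2 5 3 K0" "mult_of K0 (PG_points 5) = 8"
    using lower by blast
  have "8 \<in> ?S" using K0 by force
  then have "Max ?S = 8" using fin le by (intro Max_eqI) auto
  then show ?thesis by (simp add: m_q_def)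
qed

end
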